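(* Let $\mathbb{E}$ be a Boolean algebra and $\mathbb{M}$ a meadow, and consider conditional values in $\mathbb{CV}(\mathbb{E},\mathbb{M})$. Let $X=\sum_{i=1}^n e_i\!:\to v(t_i)$ and $Y=\sum_{j=1}^m f_j\!:\to v(r_j)$ with $e_i,f_j\in\mathbb{E}$ and $t_i,r_j\in\mathbb{M}$. Then $$X\cdot Y=\sum_{i=1}^n\sum_{j=1}^m (e_i\wedge f_j)\!:\to v(t_i\cdot r_j).$$ Moreover, if $X$ and $Y$ are given in nonoverlapping form (i.e. $e_i\wedge e_{i'}=\bot$ for all $i\neq i'$ and $f_j\wedge f_{j'}=\bot$ for all $j\neq j'$), then the displayed expression for $X\cdot Y$ is also nonoverlapping (i.e. $(e_i\wedge f_j)\wedge(e_{i'}\wedge f_{j'})=\bot$ whenever $(i,j)\neq(i',j')$).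
   Context: A meadow is a commutative ring with unit equipped with a total unary inverse ${}^{-1}$ satisfying $(x^{-1})^{-1}=x$ and $x\cdot(x\cdot x^{-1})=x$. Boolean algebras are written $(E,\vee,\wedge,\neg,\top,\bot)$. CV terms are closed terms built from $v(m)$ ($m\in\mathbb{M}$), $-X$, $X^{-1}$, $X+Y$, $X\cdot Y$, and $e\!:\to X$ ($e\in\mathbb{E}$). Fixing a Stone representation $\phi:\mathbb{E}\to W\subseteq\mathcal{P}(S)$ (an isomorphism onto a field of subsets of a set $S$), each CV term $X$ denotes a map $[\![X]\!]:S\to M$ defined pointwise for $v(m)$ (constant $m$), $-,{}^{-1},+,\cdot$, and $[\![e\!:\to X]\!](s)=[\![X]\!](s)$ if $s\in\phi(e)$ and $0$ otherwise. $\mathbb{CV}(\mathbb{E},\mathbb{M})$ is the set of CV terms modulo equality of these maps, and equality of CVs means equality in $\mathbb{CV}(\mathbb{E},\mathbb{M})$. An expression $\sum_{i=1}^n e_i\!:\to v(t_i)$ is called a flat CV expression. *)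

theory Defs
  imports Main
begin

class meadow = comm_ring_1 + inverse +
  assumes meadow_inv_inv: "inverse (inverse x) = x"
  assumes meadow_refl: "x * (x * inverse x) = x"

datatype ('e, 'm) cvterm =
    V 'm
  | Neg "('e, 'm) cvterm"
  | Inv "('e, 'm) cvterm"
  | Plus "('e, 'm) cvterm" "('e, 'm) cvterm"
  | Times "('e, 'm) cvterm" "('e, 'm) cvterm"
  | Cond 'e "('e, 'm) cvterm"

definition stone_rep :: "('e::boolean_algebra \<Rightarrow> 's set) \<Rightarrow> bool" where
  "stone_rep \<phi> \<longleftrightarrow> inj \<phi> \<and>
     (\<forall>x y. \<phi> (sup x y) = \<phi> x \<union> \<phi> y) \<and>
     (\<forall>x y. \<phi> (inf x y) = \<phi> x \<inter> \<phi> y) \<and>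
     (\<forall>x. \<phi> (- x) = - \<phi> x) \<and>
     \<phi> top = UNIV \<and> \<phi> bot = {}"

primrec sem :: "('e \<Rightarrow> 's set) \<Rightarrow> ('e, 'm::meadow) cvterm \<Rightarrow> 's \<Rightarrow> 'm" where
  "sem \<phi> (V c) = (\<lambda>s. c)"
| "sem \<phi> (Neg X) = (\<lambda>s. - sem \<phi> X s)"
| "sem \<phi> (Inv X) = (\<lambda>s. inverse (sem \<phi> X s))"
| "sem \<phi> (Plus X Y) = (\<lambda>s. sem \<phi> X s + sem \<phi> Y s)"
| "sem \<phi> (Times X Y) = (\<lambda>s. sem \<phi> X s * sem \<phi> Y s)"
| "sem \<phi> (Cond e X) = (\<lambda>s. if s \<in> \<phi> e then sem \<phi> X s else 0)"

text \<open>Equality of CVs (equality in CV(E,M) w.r.t. the Stone representation).\<close>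
definition cv_eq :: "('e \<Rightarrow> 's set) \<Rightarrow> ('e, 'm::meadow) cvterm \<Rightarrow> ('e, 'm) cvterm \<Rightarrow> bool" where
  "cv_eq \<phi> X Y \<longleftrightarrow> sem \<phi> X = sem \<phi> Y"

fun cv_sum :: "('e, 'm::meadow) cvterm list \<Rightarrow> ('e, 'm) cvterm" where
  "cv_sum [] = V 0"
| "cv_sum [X] = X"
| "cv_sum (X # Xs) = Plus X (cv_sum Xs)"

definition flat :: "nat \<Rightarrow> (nat \<Rightarrow> 'e) \<Rightarrow> (nat \<Rightarrow> 'm::meadow) \<Rightarrow> ('e, 'm) cvterm" where
  "flat n e t = cv_sum [Cond (e i) (V (t i)). i \<leftarrow> [1..<n+1]]"

end

theory Submission
  imports Defs
begin

lemma sem_cv_sum: "sem \<phi> (cv_sum xs) s = (\<Sum>x\<leftarrow>xs. sem \<phi> x s)"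
  by (induction xs rule: cv_sum.induct) auto

lemma sum_list_concat_map_mult:
  fixes a :: "'a \<Rightarrow> 'm::comm_ring_1"
  shows "(\<Sum>i\<leftarrow>I. a i) * (\<Sum>j\<leftarrow>J. b j) = (\<Sum>x\<leftarrow>concat (map (\<lambda>i. map (\<lambda>j. (i,j)) J) I). a (fst x) * b (snd x))"
  by (induction I) (auto simp: distrib_right sum_list_const_mult o_def)

theorem mainTheorem2:
  fixes \<phi> :: "'e::boolean_algebra \<Rightarrow> 's set"
    and e f :: "nat \<Rightarrow> 'e" and t r :: "nat \<Rightarrow> 'm::meadow" and n m :: nat
  assumes "stone_rep \<phi>"
  shows "cv_eq \<phi> (Times (flat n e t) (flat m f r))
           (cv_sum [Cond (inf (e i) (f j)) (V (t i * r j)). i \<leftarrow> [1..<n+1], j \<leftarrow> [1..<m+1]]) \<and>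
         ((\<forall>i\<in>{1..n}. \<forall>i'\<in>{1..n}. i \<noteq> i' \<longrightarrow> inf (e i) (e i') = bot) \<and>
         (\<forall>j\<in>{1..m}. \<forall>j'\<in>{1..m}. j \<noteq> j' \<longrightarrow> inf (f j) (f j') = bot) \<longrightarrow>
         (\<forall>i\<in>{1..n}. \<forall>i'\<in>{1..n}. \<forall>j\<in>{1..m}. \<forall>j'\<in>{1..m}. (i, j) \<noteq> (i', j') \<longrightarrow>
            inf (inf (e i) (f j)) (inf (e i') (f j')) = bot))"
proof (intro conjI impI)
  have inf: "\<And>x y. \<phi> (inf x y) = \<phi> x \<inter> \<phi> y" using assms by (simp add: stone_rep_def)
  show "cv_eq \<phi> (Times (flat n e t) (flat m f r))
           (cv_sum [Cond (inf (e i) (f j)) (V (t i * r j)). i \<leftarrow> [1..<n+1], j \<leftarrow> [1..<m+1]])"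
    unfolding cv_eq_def
  proof
    fix s
    have "sem \<phi> (Times (flat n e t) (flat m f r)) s =
      (\<Sum>i\<leftarrow>[1..<n+1]. (if s \<in> \<phi> (e i) then t i else 0)) * (\<Sum>j\<leftarrow>[1..<m+1]. (if s \<in> \<phi> (f j) then r j else 0))"
      by (simp only: flat_def sem.simps sem_cv_sum map_map o_def)
    also have "\<dots> = (\<Sum>x\<leftarrow>concat (map (\<lambda>i. map (\<lambda>j. (i,j)) [1..<m+1]) [1..<n+1]).
        (if s \<in> \<phi> (e (fst x)) then t (fst x) else 0) * (if s \<in> \<phi> (f (snd x)) then r (snd x) else 0))"
      by (rule sum_list_concat_map_mult)
    also have "\<dots> = sem \<phi> (cv_sum [Cond (inf (e i) (f j)) (V (t i * r j)). i \<leftarrow> [1..<n+1], j \<leftarrow> [1..<m+1]]) s"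
      unfolding sem_cv_sum map_concat map_map o_def
      by (rule arg_cong[where f=sum_list], rule arg_cong[where f=concat], rule map_cong, simp, rule map_cong, simp, simp add: inf)
    finally show "sem \<phi> (Times (flat n e t) (flat m f r)) s = sem \<phi> (cv_sum [Cond (inf (e i) (f j)) (V (t i * r j)). i \<leftarrow> [1..<n+1], j \<leftarrow> [1..<m+1]]) s" .
  qed
next
  assume H: "(\<forall>i\<in>{1..n}. \<forall>i'\<in>{1..n}. i \<noteq> i' \<longrightarrow> inf (e i) (e i') = bot) \<and>
         (\<forall>j\<in>{1..m}. \<forall>j'\<in>{1..m}. j \<noteq> j' \<longrightarrow> inf (f j) (f j') = bot)"
  show "\<forall>i\<in>{1..n}. \<forall>i'\<in>{1..n}. \<forall>j\<in>{1..m}. \<forall>j'\<in>{1..m}. (i, j) \<noteq> (i', j') \<longrightarrow>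
            inf (inf (e i) (f j)) (inf (e i') (f j')) = bot"
  proof (intro ballI impI)
    fix i i' j j' assume a: "i \<in> {1..n}" "i' \<in> {1..n}" "j \<in> {1..m}" "j' \<in> {1..m}" "(i, j) \<noteq> (i', j')"
    have eq: "inf (inf (e i) (f j)) (inf (e i') (f j')) = inf (inf (e i) (e i')) (inf (f j) (f j'))"
      by (simp add: inf_aci)
    show "inf (inf (e i) (f j)) (inf (e i') (f j')) = bot"
    proof (cases "i = i'")
      case True
      then have "j \<noteq> j'" using a by auto
      then show ?thesis using H a eq by simp
    next
      case False
      then show ?thesis using H a eq by simp
    qed
  qed
qed

end
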